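(* Let $[a,b]$ be a bounded interval, $n\ge2$ an integer, $h=(b-a)/n$, $x_k=a+kh$ ($0\le k\le n$), and let $X_n$ be the real vector space of maps $f:\{x_0,\ldots,x_n\}\to\mathbb R$. Let $s\ge0$, $\delta>0$, $0<c<1$, $M_0>0$, $C\ge0$, and let $N$ be a positive integer or $N=\infty$. For $1\le j\le N$ let $\theta_j:[a,b]\to[a,b]$ be Lipschitz with $\mathrm{Lip}(\theta_j)\le c$, let $\beta_j\in K_{M_0}\setminus\{0\}$, and let $C_j\in\mathbb R$ with $|C_j|\le C$. Define $\hat\beta_{j,s}\in X_n$ by $\hat\beta_{j,s}(x_k)=[1+\tfrac12C_jQ(\theta_j(x_k))][\beta_j(x_k)]^s$ and $L_{j,s}:X_n\to X_n$ by $(L_{j,s}f)(x_k)=\hat\beta_{j,s}(x_k)f^I(\theta_j(x_k))$. If $N=\infty$, assume there exists $k_0$ with $0\le k_0\le n$ such that $\sum_{j=1}^\infty\hat\beta_{j,s}(x_{k_0})<\infty$. Let $L_s=\sum_{j=1}^NL_{j,s}$. Assume $h\le1$, $Ch/4\le1$, and with $M_2=[sM_0+(1+h)/2]+\delta$ assume $\exp(-M_2h)\ge(1+c)/2$; let $M\in\mathbb R$ satisfy $\exp(Mh)\ge2$. Then $L_s(K_M\setminus\{0\})\subset K_{M-\delta}\setminus\{0\}$.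
   Context: For $f\in X_n$, $f^I:[a,b]\to\mathbb R$ is its piecewise linear interpolant: $f^I(x)=\frac{x-x_j}{h}f(x_{j+1})+\frac{x_{j+1}-x}{h}f(x_j)$ for $x_j\le x\le x_{j+1}$. For $M>0$, $K_M=\{f\in X_n: f(x_{j+1})\le f(x_j)e^{Mh}\text{ and }f(x_j)\le f(x_{j+1})e^{Mh},\ 0\le j<n\}$. $Q:[a,b]\to[0,h^2/4]$ is $Q(u)=(x_{j+1}-u)(u-x_j)$ for $x_j\le u\le x_{j+1}$. *)

theory Defs
  imports "HOL-Analysis.Analysis" "HOL-Library.Extended_Nat"
begin

text \<open>Elements of X_n are represented by functions nat => real, where f k stands
  for f(x_k); only the values at k = 0..n matter.\<close>

definition step :: "real \<Rightarrow> real \<Rightarrow> nat \<Rightarrow> real" where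
  "step a b n = (b - a) / real n"

definition grid :: "real \<Rightarrow> real \<Rightarrow> nat \<Rightarrow> nat \<Rightarrow> real" where
  "grid a b n k = a + real k * step a b n"

definition cell :: "real \<Rightarrow> real \<Rightarrow> nat \<Rightarrow> real \<Rightarrow> nat" where
  "cell a b n u = min (nat \<lfloor>(u - a) / step a b n\<rfloor>) (n - 1)"

definition interp :: "real \<Rightarrow> real \<Rightarrow> nat \<Rightarrow> (nat \<Rightarrow> real) \<Rightarrow> real \<Rightarrow> real" where
  "interp a b n f x =
    (let j = cell a b n x; h = step a b n in
      (x - grid a b n j) / h * f (Suc j) + (grid a b n (Suc j) - x) / h * f j)"

definition Qfun :: "real \<Rightarrow> real \<Rightarrow> nat \<Rightarrow> real \<Rightarrow> real" where
  "Qfun a b n u = (let j = cell a b n u in (grid a b n (Suc j) - u) * (u - grid a b n j))"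

definition Kcone :: "real \<Rightarrow> real \<Rightarrow> nat \<Rightarrow> real \<Rightarrow> (nat \<Rightarrow> real) set" where
  "Kcone a b n M = {f. \<forall>j<n. f (Suc j) \<le> f j * exp (M * step a b n)
                          \<and> f j \<le> f (Suc j) * exp (M * step a b n)}"

definition nonzero_grid :: "nat \<Rightarrow> (nat \<Rightarrow> real) \<Rightarrow> bool" where
  "nonzero_grid n f \<longleftrightarrow> (\<exists>k\<le>n. f k \<noteq> 0)"

definition idx :: "enat \<Rightarrow> nat set" where
  "idx N = {j. 1 \<le> j \<and> enat j \<le> N}"

definition betahat :: "real \<Rightarrow> real \<Rightarrow> nat \<Rightarrow> real \<Rightarrow> (nat \<Rightarrow> real \<Rightarrow> real)
      \<Rightarrow> (nat \<Rightarrow> real) \<Rightarrow> (nat \<Rightarrow> nat \<Rightarrow> real) \<Rightarrow> nat \<Rightarrow> nat \<Rightarrow> real" where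
  "betahat a b n s \<theta> Cc \<beta> j k =
     (1 + Cc j * Qfun a b n (\<theta> j (grid a b n k)) / 2) * (\<beta> j k) powr s"

definition Lop :: "real \<Rightarrow> real \<Rightarrow> nat \<Rightarrow> real \<Rightarrow> enat \<Rightarrow> (nat \<Rightarrow> real \<Rightarrow> real)
      \<Rightarrow> (nat \<Rightarrow> real) \<Rightarrow> (nat \<Rightarrow> nat \<Rightarrow> real) \<Rightarrow> (nat \<Rightarrow> real) \<Rightarrow> nat \<Rightarrow> real" where
  "Lop a b n s N \<theta> Cc \<beta> f k =
     (\<Sum>\<^sub>\<infinity>j\<in>idx N. betahat a b n s \<theta> Cc \<beta> j k * interp a b n f (\<theta> j (grid a b n k)))"

end

theory Submission
  imports Defs
begin

lemma alg_within:
  fixes A B L t t' :: real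
  assumes "A > 0" "B > 0" "B \<le> L * A" "A \<le> L * B" "L \<ge> 1"
    "0 \<le> t" "t \<le> 1" "0 \<le> t'" "t' \<le> 1"
  shows "(1-t)*A + t*B \<le> (1 + \<bar>t-t'\<bar>*(L-1)) * ((1-t')*A + t'*B)"
proof -
  define P where "P = (1-t')*A + t'*B"
  have P1: "min A B \<le> P" unfolding P_def
  proof -
    have "(1-t')*min A B \<le> (1-t')*A" using assms by (intro mult_left_mono) auto
    moreover have "t'*min A B \<le> t'*B" using assms by (intro mult_left_mono) auto
    ultimately show "min A B \<le> (1-t')*A + t'*B" by (simp add: algebra_simps)
  qed
  have D: "\<bar>B - A\<bar> \<le> (L-1) * min A B" using assms by (auto simp: min_def algebra_simps)
  have "(1-t)*A + t*B = P + (t-t')*(B-A)" unfolding P_def by (simp add: algebra_simps)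
  also have "(t-t')*(B-A) \<le> \<bar>t-t'\<bar>*\<bar>B-A\<bar>" by (metis abs_ge_self abs_mult)
  also have "\<bar>t-t'\<bar>*\<bar>B-A\<bar> \<le> \<bar>t-t'\<bar>*((L-1)*P)"
  proof (intro mult_left_mono)
    have "(L-1) * min A B \<le> (L-1)*P" using P1 assms by (intro mult_left_mono) auto
    thus "\<bar>B-A\<bar> \<le> (L-1)*P" using D by linarith
  qed simp
  finally show ?thesis unfolding P_def by (simp add: algebra_simps)
qed

lemma alg_lowerA:
  fixes A B L t :: real
  assumes "A > 0" "B > 0" "A \<le> L * B" "L \<ge> 1" "0 \<le> t" "t \<le> 1"
  shows "(L - t*(L-1))*A \<le> L*((1-t)*A + t*B)"
proof -
  have "t*A \<le> t*(L*B)" using assms by (intro mult_left_mono) auto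
  thus ?thesis by (simp add: algebra_simps)
qed

lemma alg_lowerB:
  fixes A B L t :: real
  assumes "A > 0" "B > 0" "B \<le> L * A" "L \<ge> 1" "0 \<le> t" "t \<le> 1"
  shows "(L - (1-t)*(L-1))*B \<le> L*((1-t)*A + t*B)"
proof -
  have "(1-t)*B \<le> (1-t)*(L*A)" using assms by (intro mult_left_mono) auto
  thus ?thesis by (simp add: algebra_simps)
qed

lemma alg_final:
  fixes L c a b :: real
  assumes "L \<ge> 2" "0 < c" "c < 1" "a \<ge> 0" "b \<ge> 0" "a + b \<le> c"
  shows "2*(1 + a*(L-1)) \<le> (1+c)*(L - b*(L-1))"
proof -
  have "a*(L-1) \<le> (c-b)*(L-1)" using assms by (intro mult_right_mono) auto
  moreover have "0 \<le> (1-c)*(L-2)" using assms by auto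
  moreover have "0 \<le> b*((L-1)*(1-c))" using assms by auto
  ultimately show ?thesis by (simp add: algebra_simps)
qed

lemma alg_same:
  fixes L c :: real
  assumes "L \<ge> 2" "0 < c" "c < 1"
  shows "1 + c*(L-1) \<le> L*(1+c)/2"
proof -
  have "0 \<le> (1-c)*(L-2)" using assms by auto
  thus ?thesis by (simp add: algebra_simps)
qed

lemma step_pos: "a < b \<Longrightarrow> n \<ge> 1 \<Longrightarrow> step a b n > 0"
  by (simp add: step_def)

lemma grid_Suc: "grid a b n (Suc j) = grid a b n j + step a b n"
  by (simp add: grid_def algebra_simps)

lemma grid_n: "n \<ge> 1 \<Longrightarrow> grid a b n n = b"
  by (simp add: grid_def step_def)

lemma grid_in: assumes "a < b" "n \<ge> 1" "k \<le> n" shows "grid a b n k \<in> {a..b}"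
proof -
  have h: "step a b n > 0" using assms step_pos by auto
  have "real k * step a b n \<le> real n * step a b n" using assms h by (intro mult_right_mono) auto
  also have "\<dots> = b - a" using assms by (simp add: step_def)
  finally show ?thesis using h by (auto simp: grid_def)
qed

lemma grid_diff: "grid a b n i - grid a b n j = (real i - real j) * step a b n"
  by (simp add: grid_def algebra_simps)

lemma cell_props:
  assumes "a < b" "n \<ge> 1" "u \<in> {a..b}"
  shows "cell a b n u < n" "grid a b n (cell a b n u) \<le> u" "u \<le> grid a b n (Suc (cell a b n u))"
proof -
  define h where "h = step a b n"
  have h: "h > 0" using assms step_pos h_def by auto
  define r where "r = (u - a)/h"
  have r0: "r \<ge> 0" using assms h by (simp add: r_def)
  have cdef: "cell a b n u = min (nat \<lfloor>r\<rfloor>) (n-1)" by (simp add: cell_def r_def h_def)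
  show "cell a b n u < n" using assms cdef by auto
  have "real (cell a b n u) \<le> real (nat \<lfloor>r\<rfloor>)" using cdef by simp
  also have "\<dots> \<le> r" using r0 by simp
  finally have "real (cell a b n u) * h \<le> r * h" using h by (intro mult_right_mono) auto
  also have "r * h = u - a" using h by (simp add: r_def)
  finally show "grid a b n (cell a b n u) \<le> u" by (simp add: grid_def h_def)
  show "u \<le> grid a b n (Suc (cell a b n u))"
  proof (cases "nat \<lfloor>r\<rfloor> \<le> n - 1")
    case True
    hence c: "cell a b n u = nat \<lfloor>r\<rfloor>" using cdef by simp
    have "r \<le> real (nat \<lfloor>r\<rfloor>) + 1" using r0 by linarith
    hence "r * h \<le> (real (nat \<lfloor>r\<rfloor>) + 1) * h" using h by (intro mult_right_mono) auto
    also have "r * h = u - a" using h by (simp add: r_def)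
    finally show ?thesis using c by (simp add: grid_def h_def algebra_simps)
  next
    case False
    hence c: "cell a b n u = n - 1" using cdef by simp
    have "Suc (n-1) = n" using assms by simp
    hence "grid a b n (Suc (cell a b n u)) = b" using c grid_n assms by simp
    thus ?thesis using assms by simp
  qed
qed

lemma interp_eq:
  assumes "a < b" "n \<ge> 1"
  shows "interp a b n f u = (1 - (u - grid a b n (cell a b n u))/step a b n) * f (cell a b n u)
          + ((u - grid a b n (cell a b n u))/step a b n) * f (Suc (cell a b n u))"
proof -
  have h: "step a b n > 0" using assms step_pos by auto
  show ?thesis unfolding interp_def Let_def grid_Suc using h
    by (simp add: field_simps)
qed

lemma Q_bounds:
  assumes "a < b" "n \<ge> 1" "u \<in> {a..b}"
  shows "0 \<le> Qfun a b n u" "Qfun a b n u \<le> (step a b n)^2/4"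
proof -
  define j where "j = cell a b n u"
  define p where "p = u - grid a b n j"
  define h where "h = step a b n"
  have q: "Qfun a b n u = (h - p) * p" by (simp add: Qfun_def Let_def j_def p_def h_def grid_Suc)
  have "p \<ge> 0" "h - p \<ge> 0" using cell_props[OF assms] by (auto simp: p_def h_def j_def grid_Suc)
  thus "0 \<le> Qfun a b n u" using q by simp
  have "0 \<le> (h - 2*p)^2" by simp
  thus "Qfun a b n u \<le> (step a b n)^2/4" using q by (simp add: h_def[symmetric] power2_eq_square algebra_simps)
qed

lemma interp_ratio:
  assumes ab: "a < b" and n1: "n \<ge> 1" and fpos: "\<And>k. k \<le> n \<Longrightarrow> f k > 0"
    and fK: "\<And>j. j < n \<Longrightarrow> f (Suc j) \<le> f j * L \<and> f j \<le> f (Suc j) * L"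
    and L: "L \<ge> 2" and c: "0 < c" "c < 1"
    and u: "u \<in> {a..b}" and v: "v \<in> {a..b}" and uv: "\<bar>u - v\<bar> \<le> c * step a b n"
  shows "interp a b n f u \<le> L*(1+c)/2 * interp a b n f v"
proof -
  define h where "h = step a b n"
  have h: "h > 0" using ab n1 step_pos h_def by auto
  define j where "j = cell a b n u"
  define i where "i = cell a b n v"
  define tu where "tu = (u - grid a b n j)/h"
  define tv where "tv = (v - grid a b n i)/h"
  note cu = cell_props[OF ab n1 u, folded j_def]
  note cv = cell_props[OF ab n1 v, folded i_def]
  have tu: "0 \<le> tu" "tu \<le> 1" using cu h by (auto simp: tu_def grid_Suc h_def[symmetric] field_simps)
  have tv: "0 \<le> tv" "tv \<le> 1" using cv h by (auto simp: tv_def grid_Suc h_def[symmetric] field_simps)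
  have Iu: "interp a b n f u = (1-tu) * f j + tu * f (Suc j)"
    using interp_eq[OF ab n1] by (simp add: tu_def j_def h_def)
  have Iv: "interp a b n f v = (1-tv) * f i + tv * f (Suc i)"
    using interp_eq[OF ab n1] by (simp add: tv_def i_def h_def)
  have cellfacts: "\<And>m. m < n \<Longrightarrow> f m > 0 \<and> f (Suc m) > 0 \<and> f (Suc m) \<le> L * f m \<and> f m \<le> L * f (Suc m)"
    using fpos fK by (auto simp: mult.commute)
  note fj = cellfacts[OF cu(1)] and fi = cellfacts[OF cv(1)]
  have L1: "L \<ge> 1" using L by simp
  have Ivpos: "interp a b n f v > 0"
  proof -
    have "(L - tv*(L-1))*f i \<le> L * interp a b n f v"
      using alg_lowerA[OF _ _ _ L1 tv] fi Iv by auto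
    moreover have "L - tv*(L-1) > 0"
    proof -
      have "tv*(L-1) \<le> 1*(L-1)" using tv L by (intro mult_right_mono) auto
      thus ?thesis by simp
    qed
    ultimately have "0 < L * interp a b n f v" using fi
      by (meson mult_pos_pos order_less_le_trans)
    thus ?thesis using L by (simp add: zero_less_mult_iff)
  qed
  have gd: "\<And>p q. grid a b n p - grid a b n q = (real p - real q) * h" by (simp add: grid_diff h_def)
  have diffu: "u - v = (tu - tv) * h + (real j - real i) * h"
  proof -
    have "tu*h = u - grid a b n j" "tv*h = v - grid a b n i" using h by (auto simp: tu_def tv_def)
    thus ?thesis using gd[of j i] by (simp add: algebra_simps)
  qed
  have cases: "i = j \<or> i = Suc j \<or> j = Suc i"
  proof (rule ccontr)
    assume "\<not> ?thesis"
    hence ij: "i \<ge> j + 2 \<or> j \<ge> i + 2" by auto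
    have uvh: "\<bar>u-v\<bar> < h" 
    proof -
      have "c*h < 1*h" using c h by (intro mult_strict_right_mono) auto
      thus ?thesis using uv by (simp add: h_def[symmetric])
    qed
    from ij show False
    proof
      assume "i \<ge> j + 2"
      hence "real i - real j \<ge> 2" by linarith
      hence "(real j - real i) * h \<le> -2 * h" using h by (intro mult_right_mono) auto
      moreover have "(tu - tv) * h \<le> 1 * h" using tu tv h by (intro mult_right_mono) auto
      ultimately show False using diffu \<open>\<bar>u-v\<bar> < h\<close> by linarith
    next
      assume "j \<ge> i + 2"
      hence "real j - real i \<ge> 2" by linarith
      hence "(real j - real i) * h \<ge> 2 * h" using h by (intro mult_right_mono) auto
      moreover have "(tu - tv) * h \<ge> -1 * h" using tu tv h by (intro mult_right_mono) auto
      ultimately show False using diffu \<open>\<bar>u-v\<bar> < h\<close> by linarith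
    qed
  qed
  have tdiff: "\<bar>(u - v)/h\<bar> \<le> c"
  proof -
    have "\<bar>u-v\<bar>/h \<le> c" using uv h by (simp add: h_def[symmetric] pos_divide_le_eq)
    thus ?thesis using h by (simp add: abs_divide)
  qed
  have td1: "(u-v)/h \<le> c" using tdiff by linarith
  have "(v-u)/h = -((u-v)/h)" by (metis minus_diff_eq minus_divide_left)
  hence td2: "(v-u)/h \<le> c" using tdiff by linarith
  consider "i = j" | "i = Suc j" | "j = Suc i" using cases by blast
  thus ?thesis
  proof cases
    case 1
    have W: "interp a b n f u \<le> (1 + \<bar>tu-tv\<bar>*(L-1)) * interp a b n f v"
      using alg_within[OF _ _ _ _ L1 tu tv] fj Iu Iv 1 by auto
    have "\<bar>tu - tv\<bar> = \<bar>(u-v)/h\<bar>" using diffu 1 h by simp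
    hence "\<bar>tu-tv\<bar>*(L-1) \<le> c*(L-1)" using tdiff L by (intro mult_right_mono) auto
    hence "1 + \<bar>tu-tv\<bar>*(L-1) \<le> L*(1+c)/2" using alg_same[OF L c] by linarith
    hence "(1 + \<bar>tu-tv\<bar>*(L-1)) * interp a b n f v \<le> L*(1+c)/2 * interp a b n f v"
      using Ivpos by (intro mult_right_mono) auto
    thus ?thesis using W by linarith
  next
    case 2
    have t1: "0 \<le> (1::real)" "(1::real) \<le> 1" by auto
    have W: "interp a b n f u \<le> (1 + (1-tu)*(L-1)) * f i"
      using alg_within[OF _ _ _ _ L1 tu t1] fj Iu 2 tu by auto
    have Lo: "(L - tv*(L-1))*f i \<le> L * interp a b n f v"
      using alg_lowerA[OF _ _ _ L1 tv] fi Iv by auto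
    have "(1-tu) + tv = (v - u)/h" using diffu 2 h by (simp add: field_simps)
    hence ab': "(1-tu) + tv \<le> c" using td2 by linarith
    have F: "2*(1 + (1-tu)*(L-1)) \<le> (1+c)*(L - tv*(L-1))"
      using alg_final[OF L c _ _ ab'] tu tv by auto
    have "2 * interp a b n f u \<le> 2*(1 + (1-tu)*(L-1)) * f i" using W by linarith
    also have "\<dots> \<le> (1+c)*(L - tv*(L-1)) * f i" using F fi by (intro mult_right_mono) auto
    also have "\<dots> \<le> (1+c) * (L * interp a b n f v)" using Lo c
      by (simp add: mult.assoc mult_left_mono)
    finally show ?thesis by (simp add: algebra_simps)
  next
    case 3
    have t0: "0 \<le> (0::real)" "(0::real) \<le> 1" by auto
    have W: "interp a b n f u \<le> (1 + tu*(L-1)) * f (Suc i)"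
      using alg_within[OF _ _ _ _ L1 tu t0] fj Iu 3 tu by auto
    have Lo: "(L - (1-tv)*(L-1))*f (Suc i) \<le> L * interp a b n f v"
      using alg_lowerB[OF _ _ _ L1 tv] fi Iv by auto
    have "tu + (1-tv) = (u - v)/h" using diffu 3 h by (simp add: field_simps)
    hence ab': "tu + (1-tv) \<le> c" using td1 by linarith
    have F: "2*(1 + tu*(L-1)) \<le> (1+c)*(L - (1-tv)*(L-1))"
      using alg_final[OF L c _ _ ab'] tu tv by auto
    have "2 * interp a b n f u \<le> 2*(1 + tu*(L-1)) * f (Suc i)" using W by linarith
    also have "\<dots> \<le> (1+c)*(L - (1-tv)*(L-1)) * f (Suc i)" using F fi by (intro mult_right_mono) auto
    also have "\<dots> \<le> (1+c) * (L * interp a b n f v)" using Lo c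
      by (simp add: mult.assoc mult_left_mono)
    finally show ?thesis by (simp add: algebra_simps)
  qed
qed

lemma pair_nonneg:
  fixes x y L :: real
  assumes "x \<le> y*L" "y \<le> x*L" "L \<ge> 2"
  shows "0 \<le> x"
proof -
  have "y*L \<le> (x*L)*L" using assms by (intro mult_right_mono) auto
  hence "x \<le> (x*L)*L" using assms(1) by linarith
  hence "x*1 \<le> x*(L*L)" by (simp add: mult.assoc)
  hence "0 \<le> x*(L*L - 1)" by (simp add: algebra_simps)
  moreover have "L*L \<ge> 2*2" using assms by (intro mult_mono) auto
  hence "L*L - 1 > 0" by simp
  ultimately show ?thesis by (simp add: zero_le_mult_iff)
qed

lemma cone_pos:
  fixes f :: "nat \<Rightarrow> real" and n k :: nat and a b M :: real
  assumes n1: "n \<ge> 1" and fK: "f \<in> Kcone a b n M" and nz: "nonzero_grid n f"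
    and L: "exp (M * step a b n) \<ge> 2"
  shows "\<And>k. k \<le> n \<Longrightarrow> f k > 0"
proof -
  define L where "L = exp (M * step a b n)"
  have K: "\<And>j. j < n \<Longrightarrow> f (Suc j) \<le> f j * L \<and> f j \<le> f (Suc j) * L"
    using fK by (auto simp: Kcone_def L_def)
  have L2: "L \<ge> 2" using L L_def by simp
  have nn: "\<And>k. k \<le> n \<Longrightarrow> f k \<ge> 0"
  proof -
    fix k assume k: "k \<le> n"
    show "f k \<ge> 0"
    proof (cases "k < n")
      case True
      from K[OF True] have "f k \<le> f (Suc k) * L" "f (Suc k) \<le> f k * L" by auto
      thus ?thesis by (rule pair_nonneg[OF _ _ L2])
    next
      case False
      hence k': "k = Suc (n-1)" using k n1 by simp
      have "n - 1 < n" using n1 by simp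
      from K[OF this] have "f k \<le> f (n-1) * L" "f (n-1) \<le> f k * L" using k' by auto
      thus ?thesis by (rule pair_nonneg[OF _ _ L2])
    qed
  qed
  have z: "\<And>k. k \<le> n \<Longrightarrow> (f k = 0 \<longleftrightarrow> f 0 = 0)"
  proof -
    fix k show "k \<le> n \<Longrightarrow> (f k = 0 \<longleftrightarrow> f 0 = 0)"
    proof (induction k)
      case 0 thus ?case by simp
    next
      case (Suc k)
      hence kn: "k < n" by simp
      from K[OF kn] have a1: "f (Suc k) \<le> f k * L" and a2: "f k \<le> f (Suc k) * L" by auto
      have p1: "0 \<le> f k" "0 \<le> f (Suc k)" using nn kn by auto
      have "f (Suc k) = 0 \<longleftrightarrow> f k = 0"
      proof
        assume "f (Suc k) = 0" thus "f k = 0" using a2 p1 by simp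
      next
        assume "f k = 0" thus "f (Suc k) = 0" using a1 p1 by simp
      qed
      thus ?case using Suc.IH kn by auto
    qed
  qed
  fix k assume k: "k \<le> n"
  show "f k > 0"
  proof (rule ccontr)
    assume "\<not> f k > 0"
    hence "f k = 0" using nn[OF k] by simp
    hence "f 0 = 0" using z[OF k] by simp
    have "\<forall>i\<le>n. f i = 0"
    proof (intro allI impI)
      fix i assume i: "i \<le> n" show "f i = 0" using z[OF i] \<open>f 0 = 0\<close> by blast
    qed
    thus False using nz by (auto simp: nonzero_grid_def)
  qed
qed

lemma interp_bounds:
  assumes ab: "a < b" and n1: "n \<ge> 1" and fpos: "\<And>k. k \<le> n \<Longrightarrow> f k > 0"
    and u: "u \<in> {a..b}"
  shows "0 < interp a b n f u" "interp a b n f u \<le> (\<Sum>k\<le>n. f k)"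
proof -
  define h where "h = step a b n"
  have h: "h > 0" using ab n1 step_pos h_def by auto
  define j where "j = cell a b n u"
  define t where "t = (u - grid a b n j)/h"
  note cu = cell_props[OF ab n1 u, folded j_def]
  have t: "0 \<le> t" "t \<le> 1" using cu h by (auto simp: t_def grid_Suc h_def[symmetric] field_simps)
  have I: "interp a b n f u = (1-t) * f j + t * f (Suc j)"
    using interp_eq[OF ab n1] by (simp add: t_def j_def h_def)
  have p: "f j > 0" "f (Suc j) > 0" using fpos cu by auto
  show "0 < interp a b n f u"
  proof (cases "t = 1")
    case True thus ?thesis using I p by simp
  next
    case False
    hence "(1-t) * f j > 0" using t p by simp
    moreover have "t * f (Suc j) \<ge> 0" using t p by simp
    ultimately show ?thesis using I by linarith
  qed
  define S where "S = (\<Sum>k\<le>n. f k)"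
  have fnn: "\<And>x. x \<in> {..n} - {i} \<Longrightarrow> 0 \<le> f x" for i using fpos less_imp_le by auto
  have "f j \<le> S" unfolding S_def using cu by (intro member_le_sum fnn) auto
  moreover have "f (Suc j) \<le> S" unfolding S_def using cu by (intro member_le_sum fnn) auto
  ultimately have "f j \<le> S" "f (Suc j) \<le> S" by auto
  hence "(1-t) * f j \<le> (1-t) * S" "t * f (Suc j) \<le> t * S" using t by (auto intro: mult_left_mono)
  thus "interp a b n f u \<le> (\<Sum>k\<le>n. f k)" using I S_def by (simp add: algebra_simps)
qed

lemma q_ratio:
  fixes Cj C h Qu Qv :: real
  assumes "0 \<le> Qu" "Qu \<le> h^2/4" "0 \<le> Qv" "Qv \<le> h^2/4" "\<bar>Cj\<bar> \<le> C" "C*h/4 \<le> 1" "h > 0" "h \<le> 1"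
  shows "(1 - h/2) * (1 + Cj*Qu/2) \<le> 1 + Cj*Qv/2" "1 - h/2 \<le> 1 + Cj*Qu/2"
proof -
  have e: "\<And>Q. 0 \<le> Q \<Longrightarrow> Q \<le> h^2/4 \<Longrightarrow> \<bar>Cj*Q/2\<bar> \<le> h/2"
  proof -
    fix Q :: real assume Q: "0 \<le> Q" "Q \<le> h^2/4"
    have "\<bar>Cj*Q/2\<bar> = \<bar>Cj\<bar>*Q/2" using Q by (simp add: abs_mult)
    also have "\<dots> \<le> C*(h^2/4)/2" using Q assms by (intro divide_right_mono mult_mono) auto
    also have "\<dots> = (C*h/4)*(h/2)" by (simp add: power2_eq_square)
    also have "\<dots> \<le> 1*(h/2)" using assms by (intro mult_right_mono) auto
    finally show "\<bar>Cj*Q/2\<bar> \<le> h/2" by simp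
  qed
  note eu0 = e[OF assms(1,2)] and ev0 = e[OF assms(3,4)]
  have eu: "-(h/2) \<le> Cj*Qu/2" "Cj*Qu/2 \<le> h/2" using eu0 abs_ge_minus_self[of "Cj*Qu/2"] abs_ge_self[of "Cj*Qu/2"] by linarith+
  have ev: "-(h/2) \<le> Cj*Qv/2" "Cj*Qv/2 \<le> h/2" using ev0 abs_ge_minus_self[of "Cj*Qv/2"] abs_ge_self[of "Cj*Qv/2"] by linarith+
  show "1 - h/2 \<le> 1 + Cj*Qu/2" using eu by linarith
  show "(1 - h/2) * (1 + Cj*Qu/2) \<le> 1 + Cj*Qv/2"
  proof (cases "Cj \<ge> 0")
    case True
    have "Cj*Qv/2 \<ge> 0" using True assms by simp
    have "Cj*Qu/2 \<le> h/2" using eu by linarith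
    have "(1 - h/2) * (1 + Cj*Qu/2) \<le> (1 - Cj*Qu/2) * (1 + Cj*Qu/2)"
      using eu assms True by (intro mult_right_mono) auto
    also have "\<dots> = 1 - (Cj*Qu/2)*(Cj*Qu/2)" by (simp add: algebra_simps)
    also have "\<dots> \<le> 1" using zero_le_square[of "Cj*Qu/2"] by linarith
    finally show ?thesis using \<open>Cj*Qv/2 \<ge> 0\<close> by linarith
  next
    case False
    have "Cj*Qu/2 \<le> 0" using False assms by (simp add: mult_nonpos_nonneg)
    hence "(1 - h/2) * (1 + Cj*Qu/2) \<le> (1 - h/2) * 1" using assms by (intro mult_left_mono) auto
    hence "(1 - h/2) * (1 + Cj*Qu/2) \<le> 1 - h/2" by simp
    thus ?thesis using ev by linarith
  qed
qed

lemma key_const: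
  fixes s M0 h d c :: real
  assumes h0: "h > 0" and h1: "h \<le> 1" and E: "exp (- ((s * M0 + (1 + h) / 2) + d) * h) \<ge> (1 + c) / 2"
  shows "exp (s*M0*h) * ((1+c)/2) \<le> exp (-d*h) * (1 - h/2)"
proof -
  have "- (h/2) - 2 * (h/2)^2 \<le> ln (1 - h/2)" using h0 h1 by (intro ln_one_minus_pos_lower_bound) auto
  hence "exp (- (h/2) - 2 * (h/2)^2) \<le> exp (ln (1 - h/2))" by simp
  also have "exp (ln (1 - h/2)) = 1 - h/2" using h1 by (intro exp_ln) simp
  finally have X: "exp (- (h/2) - 2 * (h/2)^2) \<le> 1 - h/2" .
  have "- ((s * M0 + (1 + h) / 2) + d) * h = -(s*M0*h) + (-d*h) + (- (h/2) - 2 * (h/2)^2)"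
    by (simp add: power2_eq_square algebra_simps)
  hence "exp (- ((s * M0 + (1 + h) / 2) + d) * h) = exp (-(s*M0*h) + (-d*h) + (- (h/2) - 2 * (h/2)^2))"
    by (rule arg_cong)
  also have "\<dots> = exp (-(s*M0*h)) * exp (-d*h) * exp (- (h/2) - 2 * (h/2)^2)"
    by (simp only: exp_add)
  also have "\<dots> \<le> exp (-(s*M0*h)) * exp (-d*h) * (1 - h/2)"
    using X by (intro mult_left_mono) auto
  finally have "(1+c)/2 \<le> exp (-(s*M0*h)) * exp (-d*h) * (1 - h/2)" using E by linarith
  hence "exp (s*M0*h) * ((1+c)/2) \<le> exp (s*M0*h) * (exp (-(s*M0*h)) * exp (-d*h) * (1 - h/2))"
    by (intro mult_left_mono) auto
  also have "\<dots> = exp (-d*h) * (1 - h/2)" by (simp add: exp_minus field_simps)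
  finally show ?thesis .
qed

theorem theorem8p3:
  fixes a b s \<delta> c M0 C M :: real and n :: nat and N :: enat
    and \<theta> :: "nat \<Rightarrow> real \<Rightarrow> real" and \<beta> :: "nat \<Rightarrow> nat \<Rightarrow> real" and Cc :: "nat \<Rightarrow> real"
  assumes ab: "a < b" and n2: "n \<ge> 2"
    and s: "s \<ge> 0" and \<delta>: "\<delta> > 0" and c: "0 < c" "c < 1" and M0: "M0 > 0" and C: "C \<ge> 0"
    and N: "N \<ge> 1"
    and \<theta>_maps: "\<And>j. j \<in> idx N \<Longrightarrow> \<theta> j ` {a..b} \<subseteq> {a..b}"
    and \<theta>_lip: "\<And>j. j \<in> idx N \<Longrightarrow> c-lipschitz_on {a..b} (\<theta> j)"
    and \<beta>_K: "\<And>j. j \<in> idx N \<Longrightarrow> \<beta> j \<in> Kcone a b n M0 \<and> nonzero_grid n (\<beta> j)"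
    and \<beta>_pos: "\<And>j k. j \<in> idx N \<Longrightarrow> k \<le> n \<Longrightarrow> \<beta> j k > 0"
    and Cj: "\<And>j. j \<in> idx N \<Longrightarrow> \<bar>Cc j\<bar> \<le> C"
    and summ: "N = \<infinity> \<Longrightarrow> \<exists>k0\<le>n. (\<lambda>j. betahat a b n s \<theta> Cc \<beta> j k0) summable_on idx N"
    and h1: "step a b n \<le> 1" and hC: "C * step a b n / 4 \<le> 1"
    and M2: "exp (- ((s * M0 + (1 + step a b n) / 2) + \<delta>) * step a b n) \<ge> (1 + c) / 2"
    and M: "exp (M * step a b n) \<ge> 2"
  shows "\<forall>f. f \<in> Kcone a b n M \<and> nonzero_grid n f \<longrightarrow>
           Lop a b n s N \<theta> Cc \<beta> f \<in> Kcone a b n (M - \<delta>) \<and>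
           nonzero_grid n (Lop a b n s N \<theta> Cc \<beta> f)"
proof (intro allI impI)
  fix f assume hf: "f \<in> Kcone a b n M \<and> nonzero_grid n f"
  have n1: "n \<ge> 1" using n2 by simp
  define h where "h = step a b n"
  have h0: "h > 0" using ab n1 step_pos h_def by auto
  have h1': "h \<le> 1" using h1 h_def by simp
  define L where "L = exp (M * h)"
  have L2: "L \<ge> 2" using M by (simp add: L_def h_def)
  define I where "I = idx N"
  have fpos: "\<And>k. k \<le> n \<Longrightarrow> f k > 0" using cone_pos[OF n1 _ _ M] hf by blast
  have fK: "\<And>j. j < n \<Longrightarrow> f (Suc j) \<le> f j * L \<and> f j \<le> f (Suc j) * L"
    using hf by (auto simp: Kcone_def L_def h_def)
  have gridin: "\<And>k. k \<le> n \<Longrightarrow> grid a b n k \<in> {a..b}" using grid_in[OF ab n1] by blast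
  have thin: "\<And>j k. j \<in> I \<Longrightarrow> k \<le> n \<Longrightarrow> \<theta> j (grid a b n k) \<in> {a..b}"
    using \<theta>_maps gridin I_def by blast
  define q where "q j k = 1 + Cc j * Qfun a b n (\<theta> j (grid a b n k)) / 2" for j k
  define bs where "bs j k = (\<beta> j k) powr s" for j k
  define F where "F j k = interp a b n f (\<theta> j (grid a b n k))" for j k
  define T where "T k j = betahat a b n s \<theta> Cc \<beta> j k * F j k" for k j
  define E where "E = exp (s*M0*h)"
  have bh: "\<And>j k. betahat a b n s \<theta> Cc \<beta> j k = q j k * bs j k"
    by (simp add: betahat_def q_def bs_def)
  have Lop_eq: "\<And>k. Lop a b n s N \<theta> Cc \<beta> f k = infsum (T k) I"
    by (simp add: Lop_def T_def[abs_def] F_def I_def)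
  have qf: "\<And>j k k'. j \<in> I \<Longrightarrow> k \<le> n \<Longrightarrow> k' \<le> n \<Longrightarrow> (1 - h/2) * q j k' \<le> q j k \<and> 1 - h/2 \<le> q j k"
  proof -
    fix j k k' assume j: "j \<in> I" and k: "k \<le> n" and k': "k' \<le> n"
    note Qu = Q_bounds[OF ab n1 thin[OF j k']] and Qv = Q_bounds[OF ab n1 thin[OF j k]]
    have Cj': "\<bar>Cc j\<bar> \<le> C" using Cj j I_def by simp
    have hC': "C*h/4 \<le> 1" using hC h_def by simp
    note r = q_ratio[OF Qv(1) Qv(2)[folded h_def] Qu(1) Qu(2)[folded h_def] Cj' hC' h0 h1']
    note r2 = q_ratio[OF Qu(1) Qu(2)[folded h_def] Qv(1) Qv(2)[folded h_def] Cj' hC' h0 h1']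
    show "(1 - h/2) * q j k' \<le> q j k \<and> 1 - h/2 \<le> q j k"
      using r r2 by (simp add: q_def)
  qed
  have hpos: "1 - h/2 > 0" using h1' by simp
  have qpos: "\<And>j k. j \<in> I \<Longrightarrow> k \<le> n \<Longrightarrow> q j k > 0" using qf hpos by (meson less_le_trans)
  have bspos: "\<And>j k. j \<in> I \<Longrightarrow> k \<le> n \<Longrightarrow> bs j k > 0"
  proof -
    fix j k assume "j \<in> I" "k \<le> n"
    hence "\<beta> j k > 0" using \<beta>_pos I_def by simp
    thus "bs j k > 0" by (simp add: bs_def)
  qed
  have Fpos: "\<And>j k. j \<in> I \<Longrightarrow> k \<le> n \<Longrightarrow> F j k > 0"
    using interp_bounds(1)[OF ab n1 fpos] thin by (simp add: F_def)
  have Fle: "\<And>j k. j \<in> I \<Longrightarrow> k \<le> n \<Longrightarrow> F j k \<le> (\<Sum>i\<le>n. f i)"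
    using interp_bounds(2)[OF ab n1 fpos] thin by (simp add: F_def)
  have Tpos: "\<And>j k. j \<in> I \<Longrightarrow> k \<le> n \<Longrightarrow> T k j > 0"
    using qpos bspos Fpos by (simp add: T_def bh)
  have bsf: "\<And>j k k'. j \<in> I \<Longrightarrow> k \<le> n \<Longrightarrow> k' \<le> n \<Longrightarrow> (k' = Suc k \<or> k = Suc k') \<Longrightarrow> bs j k' \<le> E * bs j k"
  proof -
    fix j k k' assume j: "j \<in> I" and k: "k \<le> n" and k': "k' \<le> n" and adj: "k' = Suc k \<or> k = Suc k'"
    have bK: "\<beta> j \<in> Kcone a b n M0" using \<beta>_K j I_def by simp
    have "\<beta> j k' \<le> \<beta> j k * exp (M0 * h)"
      using adj
    proof
      assume "k' = Suc k" thus ?thesis using bK k' by (auto simp: Kcone_def h_def)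
    next
      assume "k = Suc k'" thus ?thesis using bK k by (auto simp: Kcone_def h_def)
    qed
    moreover have bp: "\<beta> j k' > 0" "\<beta> j k > 0" using \<beta>_pos j k k' I_def by auto
    ultimately have "bs j k' \<le> (\<beta> j k * exp (M0 * h)) powr s"
      unfolding bs_def using s by (intro powr_mono2) auto
    also have "\<dots> = bs j k * exp (M0 * h) powr s"
      unfolding bs_def using bp by (simp add: powr_mult)
    also have "exp (M0 * h) powr s = E" by (simp add: exp_powr_real E_def algebra_simps)
    finally show "bs j k' \<le> E * bs j k" by (simp add: mult.commute)
  qed
  have Ff: "\<And>j k k'. j \<in> I \<Longrightarrow> k \<le> n \<Longrightarrow> k' \<le> n \<Longrightarrow> (k' = Suc k \<or> k = Suc k') \<Longrightarrow> F j k' \<le> L*(1+c)/2 * F j k"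
  proof -
    fix j k k' assume j: "j \<in> I" and k: "k \<le> n" and k': "k' \<le> n" and adj: "k' = Suc k \<or> k = Suc k'"
    have lip: "c-lipschitz_on {a..b} (\<theta> j)" using \<theta>_lip j I_def by simp
    have "dist (\<theta> j (grid a b n k')) (\<theta> j (grid a b n k)) \<le> c * dist (grid a b n k') (grid a b n k)"
      using lipschitz_onD[OF lip gridin[OF k'] gridin[OF k]] .
    moreover have "dist (grid a b n k') (grid a b n k) = h"
      using adj h0 by (auto simp: dist_real_def grid_Suc h_def)
    ultimately have "\<bar>\<theta> j (grid a b n k') - \<theta> j (grid a b n k)\<bar> \<le> c * step a b n"
      by (simp add: dist_real_def h_def)
    thus "F j k' \<le> L*(1+c)/2 * F j k"
      unfolding F_def using interp_ratio[of a b n f L c "\<theta> j (grid a b n k')" "\<theta> j (grid a b n k)", OF ab n1 fpos fK L2 c thin[OF j k'] thin[OF j k]] by blast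
  qed
  have Kc: "E * ((1+c)/2) \<le> exp (-\<delta>*h) * (1 - h/2)"
    unfolding E_def using key_const[OF h0 h1' M2[folded h_def]] .
  define R where "R = L * exp (-\<delta>*h)"
  have Tratio: "\<And>j k k'. j \<in> I \<Longrightarrow> k \<le> n \<Longrightarrow> k' \<le> n \<Longrightarrow> (k' = Suc k \<or> k = Suc k') \<Longrightarrow> T k' j \<le> R * T k j"
  proof -
    fix j k k' assume j: "j \<in> I" and k: "k \<le> n" and k': "k' \<le> n" and adj: "k' = Suc k \<or> k = Suc k'"
    have A1: "(1 - h/2) * q j k' \<le> q j k" using qf[OF j k k'] by simp
    have A2: "bs j k' \<le> E * bs j k" using bsf[OF j k k' adj] .
    have A3: "F j k' \<le> L*(1+c)/2 * F j k" using Ff[OF j k k' adj] .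
    have "(1 - h/2) * T k' j = ((1 - h/2) * q j k') * bs j k' * F j k'"
      by (simp add: T_def bh mult.assoc)
    also have "\<dots> \<le> q j k * (E * bs j k) * (L*(1+c)/2 * F j k)"
      using A1 A2 A3 hpos qpos[OF j k'] bspos[OF j k'] Fpos[OF j k'] qpos[OF j k]
      by (intro mult_mono) auto
    also have "\<dots> = (q j k * bs j k * F j k) * (L * (E * ((1+c)/2)))"
      by (simp add: algebra_simps)
    also have "\<dots> \<le> (q j k * bs j k * F j k) * (L * (exp (-\<delta>*h) * (1 - h/2)))"
      using Kc L2 qpos[OF j k] bspos[OF j k] Fpos[OF j k] by (intro mult_left_mono) auto
    also have "\<dots> = (1 - h/2) * (R * T k j)"
      by (simp add: T_def bh R_def algebra_simps)
    finally show "T k' j \<le> R * T k j" using hpos by simp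
  qed
  have summT: "\<And>k. k \<le> n \<Longrightarrow> T k summable_on I"
  proof (cases "N = \<infinity>")
    case False
    then obtain m where m: "N = enat m" by auto
    have "I \<subseteq> {..m}" using m by (auto simp: I_def idx_def)
    hence "finite I" using finite_subset by blast
    thus "\<And>k. k \<le> n \<Longrightarrow> T k summable_on I" by simp
  next
    case True
    then obtain k0 where k0: "k0 \<le> n" "(\<lambda>j. betahat a b n s \<theta> Cc \<beta> j k0) summable_on I"
      using summ I_def by blast
    define B where "B k = (\<lambda>j. betahat a b n s \<theta> Cc \<beta> j k)" for k
    have Bstep: "\<And>k k'. k \<le> n \<Longrightarrow> k' \<le> n \<Longrightarrow> (k' = Suc k \<or> k = Suc k') \<Longrightarrow> B k summable_on I \<Longrightarrow> B k' summable_on I"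
    proof -
      fix k k' assume k: "k \<le> n" and k': "k' \<le> n" and adj: "k' = Suc k \<or> k = Suc k'" and sk: "B k summable_on I"
      have "(\<lambda>j. B k j * (E / (1 - h/2))) summable_on I" using sk by (rule summable_on_cmult_left)
      moreover have "\<And>j. j \<in> I \<Longrightarrow> B k' j \<le> B k j * (E / (1 - h/2))"
      proof -
        fix j assume j: "j \<in> I"
        have "(1 - h/2) * B k' j = ((1 - h/2) * q j k') * bs j k'" by (simp add: B_def bh)
        also have "\<dots> \<le> q j k * (E * bs j k)"
          using qf[OF j k k'] bsf[OF j k k' adj] hpos qpos[OF j k'] bspos[OF j k'] qpos[OF j k]
          by (intro mult_mono) auto
        also have "\<dots> = (1 - h/2) * (B k j * (E / (1 - h/2)))" using hpos by (simp add: B_def bh field_simps)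
        finally show "B k' j \<le> B k j * (E / (1 - h/2))" using hpos by (simp add: pos_le_divide_eq[OF hpos] mult.commute)
      qed
      moreover have "\<And>j. j \<in> I \<Longrightarrow> 0 \<le> B k' j"
        using qpos bspos k' by (simp add: B_def bh less_imp_le)
      ultimately show "B k' summable_on I" by (rule summable_on_comparison_test)
    qed
    have up: "\<And>d. k0 + d \<le> n \<Longrightarrow> B (k0 + d) summable_on I"
    proof -
      fix d show "k0 + d \<le> n \<Longrightarrow> B (k0 + d) summable_on I"
      proof (induction d)
        case 0 thus ?case using k0 by (simp add: B_def)
      next
        case (Suc d) thus ?case using Bstep[of "k0 + d" "k0 + Suc d"] by simp
      qed
    qed
    have down: "\<And>d. d \<le> k0 \<Longrightarrow> B (k0 - d) summable_on I"
    proof -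
      fix d show "d \<le> k0 \<Longrightarrow> B (k0 - d) summable_on I"
      proof (induction d)
        case 0 thus ?case using k0 by (simp add: B_def)
      next
        case (Suc d)
        have "k0 - d = Suc (k0 - Suc d)" using Suc.prems by simp
        thus ?case using Bstep[of "k0 - d" "k0 - Suc d"] Suc k0 by simp
      qed
    qed
    have Ball: "\<And>k. k \<le> n \<Longrightarrow> B k summable_on I"
    proof -
      fix k assume k: "k \<le> n"
      show "B k summable_on I"
      proof (cases "k0 \<le> k")
        case True thus ?thesis using up[of "k - k0"] k by simp
      next
        case False thus ?thesis using down[of "k0 - k"] by simp
      qed
    qed
    fix k assume k: "k \<le> n"
    have "(\<lambda>j. B k j * (\<Sum>i\<le>n. f i)) summable_on I" using Ball[OF k] by (rule summable_on_cmult_left)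
    moreover have "\<And>j. j \<in> I \<Longrightarrow> T k j \<le> B k j * (\<Sum>i\<le>n. f i)"
      unfolding T_def B_def using Fle k qpos bspos
      by (intro mult_left_mono) (auto simp: bh less_imp_le)
    moreover have "\<And>j. j \<in> I \<Longrightarrow> 0 \<le> T k j" using Tpos k less_imp_le by blast
    ultimately show "T k summable_on I" by (rule summable_on_comparison_test)
  qed
  have Lratio: "\<And>k k'. k \<le> n \<Longrightarrow> k' \<le> n \<Longrightarrow> (k' = Suc k \<or> k = Suc k') \<Longrightarrow>
      Lop a b n s N \<theta> Cc \<beta> f k' \<le> Lop a b n s N \<theta> Cc \<beta> f k * R"
  proof -
    fix k k' assume k: "k \<le> n" and k': "k' \<le> n" and adj: "k' = Suc k \<or> k = Suc k'"
    have "infsum (T k') I \<le> infsum (\<lambda>j. R * T k j) I"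
      using summT[OF k'] summable_on_cmult_right[OF summT[OF k]] Tratio[OF _ k k' adj]
      by (intro infsum_mono) auto
    also have "\<dots> = R * infsum (T k) I" by (rule infsum_cmult_right') 
    finally show "Lop a b n s N \<theta> Cc \<beta> f k' \<le> Lop a b n s N \<theta> Cc \<beta> f k * R"
      by (simp add: Lop_eq mult.commute)
  qed
  have Req: "exp ((M - \<delta>) * step a b n) = R"
    by (simp add: R_def L_def h_def algebra_simps exp_add[symmetric])
  show "Lop a b n s N \<theta> Cc \<beta> f \<in> Kcone a b n (M - \<delta>) \<and> nonzero_grid n (Lop a b n s N \<theta> Cc \<beta> f)"
  proof
    show "Lop a b n s N \<theta> Cc \<beta> f \<in> Kcone a b n (M - \<delta>)"
      unfolding Kcone_def Req using Lratio by auto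
    have oneI: "1 \<in> I" using N by (simp add: I_def idx_def one_enat_def)
    have "infsum (T 0) {1} \<le> infsum (T 0) I"
      using summT[of 0] Tpos[of _ 0] oneI by (intro infsum_mono_neutral) (auto intro: less_imp_le)
    moreover have "infsum (T 0) {1} > 0" using Tpos[OF oneI, of 0] by simp
    ultimately have "Lop a b n s N \<theta> Cc \<beta> f 0 > 0" using Lop_eq by simp
    thus "nonzero_grid n (Lop a b n s N \<theta> Cc \<beta> f)" unfolding nonzero_grid_def by auto
  qed
qed

end
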